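(* Let $X$ be a real Hilbert space with closed unit ball $\mathcal B$, $\Omega\subseteq X$ a closed symmetric convex set, $V\subseteq X$ a subspace, and $R,Z,\lambda\ge1$. If (i) $\mathcal B/V\subseteq R(\Omega\cap\mathcal B)/V$ and (ii) $\Omega\cap V\subseteq Z\mathcal B$, then $(\Omega+\lambda\mathcal B)\cap V\subseteq Z(3R\lambda+1)\mathcal B$.
   Context: For $A\subseteq X$, $A/V=\{a+V:a\in A\}$; (i) means every element of $\mathcal B$ differs by an element of $V$ from some element of $R(\Omega\cap\mathcal B)$. *)

theory Defs
  imports "HOL-Analysis.Analysis"
begin

end

theory Submission
  imports Defs
begin

theorem lemma9p11:
  fixes \<Omega> V :: "'a::{real_inner, complete_space} set"
    and R Z lam :: real
  assumes "closed \<Omega>" and "\<And>x. x \<in> \<Omega> \<Longrightarrow> - x \<in> \<Omega>" and "convex \<Omega>"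
    and "subspace V"
    and "R \<ge> 1" and "Z \<ge> 1" and "lam \<ge> 1"
    and i: "\<forall>b \<in> cball 0 1. \<exists>w \<in> (\<lambda>y. R *\<^sub>R y) ` (\<Omega> \<inter> cball 0 1). b - w \<in> V"
    and ii: "\<Omega> \<inter> V \<subseteq> (\<lambda>y. Z *\<^sub>R y) ` cball 0 1"
  shows "{w + lam *\<^sub>R b | w b. w \<in> \<Omega> \<and> b \<in> cball 0 1} \<inter> V
           \<subseteq> (\<lambda>y. (Z * (3 * R * lam + 1)) *\<^sub>R y) ` cball 0 1"
proof
  fix x assume "x \<in> {w + lam *\<^sub>R b | w b. w \<in> \<Omega> \<and> b \<in> cball 0 1} \<inter> V"
  then obtain w b where x: "x = w + lam *\<^sub>R b" and w: "w \<in> \<Omega>" and b: "norm b \<le> 1"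
    and xV: "x \<in> V" by auto
  have "b \<in> cball 0 1" using b by simp
  with i obtain u' where "u' \<in> (\<lambda>y. R *\<^sub>R y) ` (\<Omega> \<inter> cball 0 1)" "b - u' \<in> V" by blast
  then obtain u where u: "u \<in> \<Omega>" "norm u \<le> 1" and v: "b - R *\<^sub>R u \<in> V" by auto
  define v where "v = b - R *\<^sub>R u"
  have nv: "norm v \<le> 1 + R"
  proof -
    have "norm v \<le> norm b + norm (R *\<^sub>R u)" unfolding v_def by (rule norm_triangle_ineq4)
    also have "norm (R *\<^sub>R u) \<le> R" using u assms(5) by (simp add: mult_left_le)
    finally show ?thesis using b by simp
  qed
  define s where "s = w + (lam * R) *\<^sub>R u"
  have sx: "s = x - lam *\<^sub>R v" unfolding s_def x v_def by (simp add: algebra_simps)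
  have sV: "s \<in> V" unfolding sx using xV v assms(4) unfolding v_def
    by (simp add: subspace_diff subspace_scale)
  have pos: "1 + lam * R > 0" using assms by (smt (verit) mult_nonneg_nonneg)
  define t where "t = inverse (1 + lam * R) *\<^sub>R s"
  have tO: "t \<in> \<Omega>"
  proof -
    have "t = (1 / (1 + lam*R)) *\<^sub>R w + (lam*R / (1 + lam*R)) *\<^sub>R u"
      unfolding t_def s_def by (simp add: algebra_simps divide_inverse)
    moreover have "(1 / (1 + lam*R)) + (lam*R / (1 + lam*R)) = 1" using pos
      by (simp add: field_simps)
    moreover have "0 \<le> lam*R / (1 + lam*R)" using pos assms by simp
    moreover have "0 \<le> 1 / (1 + lam*R)" using pos by simp
    ultimately show ?thesis using assms(3) w u unfolding convex_def by metis
  qed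
  have tV: "t \<in> V" unfolding t_def using sV assms(4) by (simp add: subspace_scale)
  from ii tO tV have "t \<in> (\<lambda>y. Z *\<^sub>R y) ` cball 0 1" by blast
  then obtain y where "t = Z *\<^sub>R y" "norm y \<le> 1" unfolding image_iff by (metis mem_cball_0)
  hence nt: "norm t \<le> Z" using assms(6) by (simp add: mult_left_le)
  have ns: "norm s \<le> Z * (1 + lam * R)"
  proof -
    have "s = (1 + lam*R) *\<^sub>R t" unfolding t_def using pos by simp
    hence "norm s = (1 + lam*R) * norm t" using pos by simp
    thus ?thesis using nt pos by (simp add: mult.commute mult_left_mono)
  qed
  have nlv: "norm (lam *\<^sub>R v) \<le> lam * (1 + R)" using nv assms(7) by (simp add: mult_left_mono)
  have "lam * (1 + R) \<le> Z * (2 * R * lam)"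
  proof -
    have "lam * (1+R) \<le> lam * (2*R)" using assms by (intro mult_left_mono) auto
    also have "\<dots> = (2*R*lam) * 1" by simp
    also have "\<dots> \<le> (2*R*lam) * Z" using assms by (intro mult_left_mono) auto
    also have "\<dots> = Z * (2*R*lam)" by simp
    finally show ?thesis .
  qed
  have xs: "x = s + lam *\<^sub>R v" using sx by simp
  have nx: "norm x \<le> Z * (3 * R * lam + 1)"
  proof -
    have "norm x \<le> norm s + norm (lam *\<^sub>R v)" unfolding xs by (rule norm_triangle_ineq)
    also have "\<dots> \<le> Z * (1 + lam*R) + Z * (2*R*lam)" using ns nlv \<open>lam * (1 + R) \<le> Z * (2 * R * lam)\<close> by linarith
    also have "\<dots> = Z * (3 * R * lam + 1)" by (simp add: algebra_simps)
    finally show ?thesis .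
  qed
  define c where "c = Z * (3 * R * lam + 1)"
  have cpos: "c > 0" unfolding c_def using assms by (smt (verit) mult_nonneg_nonneg mult_pos_pos)
  have "x = c *\<^sub>R (inverse c *\<^sub>R x)" using cpos by simp
  moreover have "norm (inverse c *\<^sub>R x) \<le> 1" using nx cpos unfolding c_def[symmetric]
    by (simp add: field_simps)
  ultimately show "x \<in> (\<lambda>y. (Z * (3 * R * lam + 1)) *\<^sub>R y) ` cball 0 1"
    unfolding c_def[symmetric] by (metis image_eqI mem_cball_0)
qed

end
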